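(* Let $Q$ be a finite quiver of diameter $1$. The assignment $\sigma\mapsto(Q^+_\sigma,Q^-_\sigma)$ restricts to a bijection $P$ from the set $\sigma(Q)^{\mathrm a}$ of acyclic labelings of $Q$ onto the set $\mathrm R(F(Q))$ of Reedy structures on $F(Q)$.
   Context: $Q$ has diameter $1$ if no vertex is both the target of an arrow and the source of an arrow. $F(Q)$ is the free category on $Q$. A labeling is a map $\sigma\colon Q_1\to\{+,-\}$. It is acyclic if the orientation of the underlying undirected multigraph obtained by reversing the arrows labelled $-$ has no directed cycle. $Q^+_\sigma$ and $Q^-_\sigma$ are the wide subcategories of $F(Q)$ generated by the arrows labelled $+$ and $-$ respectively. A Reedy structure on a small category $J$ is a pair $(J^+,J^-)$ of wide subcategories for which there exists a degree function $\deg\colon\mathrm{ob}J\to\mathbb N$ such that: - non-identity morphisms of $J^+$ strictly raise degree; - non-identity morphisms of $J^-$ strictly lower degree; - every morphism factors uniquely as a morphism of $J^-$ followed by a morphism of $J^+$. The degree function itself is not part of the data. *)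

theory Defs
  imports Main "HOL-Library.FuncSet"
begin

record ('o,'m) cat =
  Ob   :: "'o set"
  Mor  :: "'m set"
  Dom  :: "'m \<Rightarrow> 'o"
  Cod  :: "'m \<Rightarrow> 'o"
  Idm  :: "'o \<Rightarrow> 'm"
  Comp :: "'m \<Rightarrow> 'm \<Rightarrow> 'm"   (* Comp g f = g \<circ> f, defined when Cod f = Dom g *)

definition wide_subcat :: "('o,'m) cat \<Rightarrow> 'm set \<Rightarrow> bool" where
  "wide_subcat C S \<longleftrightarrow>
     S \<subseteq> Mor C \<and>
     (\<forall>a\<in>Ob C. Idm C a \<in> S) \<and>
     (\<forall>f\<in>S. \<forall>g\<in>S. Cod C f = Dom C g \<longrightarrow> Comp C g f \<in> S)"

definition gen_wide :: "('o,'m) cat \<Rightarrow> 'm set \<Rightarrow> 'm set" where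
  "gen_wide C S = \<Inter>{T. wide_subcat C T \<and> S \<subseteq> T}"

definition reedy_structure :: "('o,'m) cat \<Rightarrow> 'm set \<Rightarrow> 'm set \<Rightarrow> bool" where
  "reedy_structure C Jp Jm \<longleftrightarrow>
     wide_subcat C Jp \<and> wide_subcat C Jm \<and>
     (\<exists>deg :: 'o \<Rightarrow> nat.
        (\<forall>f\<in>Jp. f \<noteq> Idm C (Dom C f) \<longrightarrow> deg (Dom C f) < deg (Cod C f)) \<and>
        (\<forall>f\<in>Jm. f \<noteq> Idm C (Dom C f) \<longrightarrow> deg (Cod C f) < deg (Dom C f)) \<and>
        (\<forall>f\<in>Mor C. \<exists>!p. p \<in> Jm \<times> Jp \<and> Cod C (fst p) = Dom C (snd p)
                              \<and> Comp C (snd p) (fst p) = f))"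

definition reedy_structures :: "('o,'m) cat \<Rightarrow> ('m set \<times> 'm set) set" where
  "reedy_structures C = {(Jp, Jm). reedy_structure C Jp Jm}"

record ('v,'e) quiver =
  Verts :: "'v set"
  Arrs  :: "'e set"
  src   :: "'e \<Rightarrow> 'v"
  tgt   :: "'e \<Rightarrow> 'v"

definition finite_quiver :: "('v,'e) quiver \<Rightarrow> bool" where
  "finite_quiver Q \<longleftrightarrow> finite (Verts Q) \<and> finite (Arrs Q) \<and>
     (\<forall>e\<in>Arrs Q. src Q e \<in> Verts Q \<and> tgt Q e \<in> Verts Q)"

definition diameter_one :: "('v,'e) quiver \<Rightarrow> bool" where
  "diameter_one Q \<longleftrightarrow>
     \<not> (\<exists>v. (\<exists>e\<in>Arrs Q. tgt Q e = v) \<and> (\<exists>e\<in>Arrs Q. src Q e = v))"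

definition is_path :: "('v,'e) quiver \<Rightarrow> 'v \<Rightarrow> 'e list \<Rightarrow> 'v \<Rightarrow> bool" where
  "is_path Q a es b \<longleftrightarrow> a \<in> Verts Q \<and> b \<in> Verts Q \<and> set es \<subseteq> Arrs Q \<and>
     (es = [] \<longrightarrow> a = b) \<and>
     (es \<noteq> [] \<longrightarrow> src Q (hd es) = a \<and> tgt Q (last es) = b \<and>
        (\<forall>i. Suc i < length es \<longrightarrow> tgt Q (es ! i) = src Q (es ! Suc i)))"

definition free_cat :: "('v,'e) quiver \<Rightarrow> ('v, 'v \<times> 'e list \<times> 'v) cat" where
  "free_cat Q = \<lparr> Ob = Verts Q,
     Mor = {(a, es, b). is_path Q a es b},
     Dom = (\<lambda>f. fst f),
     Cod = (\<lambda>f. snd (snd f)),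
     Idm = (\<lambda>a. (a, [], a)),
     Comp = (\<lambda>g f. (fst f, fst (snd f) @ fst (snd g), snd (snd g))) \<rparr>"

definition arr_mor :: "('v,'e) quiver \<Rightarrow> 'e \<Rightarrow> 'v \<times> 'e list \<times> 'v" where
  "arr_mor Q e = (src Q e, [e], tgt Q e)"

datatype sign = Plus | Minus

definition labelings :: "('v,'e) quiver \<Rightarrow> ('e \<Rightarrow> sign) set" where
  "labelings Q = Arrs Q \<rightarrow>\<^sub>E (UNIV :: sign set)"

definition orientation :: "('v,'e) quiver \<Rightarrow> ('e \<Rightarrow> sign) \<Rightarrow> ('v \<times> 'v) set" where
  "orientation Q \<sigma> =
     {(src Q e, tgt Q e) | e. e \<in> Arrs Q \<and> \<sigma> e = Plus} \<union>
     {(tgt Q e, src Q e) | e. e \<in> Arrs Q \<and> \<sigma> e = Minus}"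

definition acyclic_labeling :: "('v,'e) quiver \<Rightarrow> ('e \<Rightarrow> sign) \<Rightarrow> bool" where
  "acyclic_labeling Q \<sigma> \<longleftrightarrow> acyclic (orientation Q \<sigma>)"

definition Qplus :: "('v,'e) quiver \<Rightarrow> ('e \<Rightarrow> sign) \<Rightarrow> ('v \<times> 'e list \<times> 'v) set" where
  "Qplus Q \<sigma> = gen_wide (free_cat Q) {arr_mor Q e | e. e \<in> Arrs Q \<and> \<sigma> e = Plus}"

definition Qminus :: "('v,'e) quiver \<Rightarrow> ('e \<Rightarrow> sign) \<Rightarrow> ('v \<times> 'e list \<times> 'v) set" where
  "Qminus Q \<sigma> = gen_wide (free_cat Q) {arr_mor Q e | e. e \<in> Arrs Q \<and> \<sigma> e = Minus}"

end

theory Submission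
  imports Defs
begin

lemma fc_simps[simp]:
  "Ob (free_cat Q) = Verts Q"
  "Mor (free_cat Q) = {(a, es, b). is_path Q a es b}"
  "Dom (free_cat Q) = fst"
  "Cod (free_cat Q) = (\<lambda>f. snd (snd f))"
  "Idm (free_cat Q) = (\<lambda>a. (a, [], a))"
  "Comp (free_cat Q) = (\<lambda>g f. (fst f, fst (snd f) @ fst (snd g), snd (snd g)))"
  by (auto simp: free_cat_def fun_eq_iff)

lemma d1_no: "diameter_one Q \<Longrightarrow> e1 \<in> Arrs Q \<Longrightarrow> e2 \<in> Arrs Q \<Longrightarrow> tgt Q e1 \<noteq> src Q e2"
  unfolding diameter_one_def by blast

lemma mor_char:
  assumes fq: "finite_quiver Q" and d1: "diameter_one Q"
  shows "{(a, es, b). is_path Q a es b} = (\<lambda>a. (a,[],a)) ` Verts Q \<union> arr_mor Q ` Arrs Q"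
proof
  show "{(a, es, b). is_path Q a es b} \<subseteq> (\<lambda>a. (a,[],a)) ` Verts Q \<union> arr_mor Q ` Arrs Q"
  proof clarify
    fix a es b assume p: "is_path Q a es b" and n: "(a, es, b) \<notin> arr_mor Q ` Arrs Q"
    show "(a, es, b) \<in> (\<lambda>a. (a,[],a)) ` Verts Q"
    proof (cases es)
      case Nil then show ?thesis using p by (auto simp: is_path_def)
    next
      case (Cons e1 rest)
      show ?thesis
      proof (cases rest)
        case Nil
        then have "(a, es, b) = arr_mor Q e1" "e1 \<in> Arrs Q" using p Cons by (auto simp: is_path_def arr_mor_def)
        then show ?thesis using n by auto
      next
        case (Cons e2 r2)
        then have "tgt Q e1 = src Q e2" "e1 \<in> Arrs Q" "e2 \<in> Arrs Q"
          using p \<open>es = e1 # rest\<close> unfolding is_path_def by (auto dest: spec[of _ 0])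
        then show ?thesis using d1_no[OF d1] by blast
      qed
    qed
  qed
  show "(\<lambda>a. (a,[],a)) ` Verts Q \<union> arr_mor Q ` Arrs Q \<subseteq> {(a, es, b). is_path Q a es b}"
    using fq by (auto simp: is_path_def arr_mor_def finite_quiver_def)
qed

lemma arr_mor_inj[simp]: "arr_mor Q e = arr_mor Q e' \<longleftrightarrow> e = e'"
  by (auto simp: arr_mor_def)

lemma arr_mor_ne[simp]: "arr_mor Q e \<noteq> (a, [], b)" "(a, [], b) \<noteq> arr_mor Q e"
  by (auto simp: arr_mor_def)

lemma arr_mor_parts[simp]: "fst (arr_mor Q e) = src Q e" "fst (snd (arr_mor Q e)) = [e]"
  "snd (snd (arr_mor Q e)) = tgt Q e"
  by (auto simp: arr_mor_def)

definition ids where "ids Q = (\<lambda>a. (a,[],a)) ` Verts Q"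

lemma wide_char:
  assumes fq: "finite_quiver Q" and d1: "diameter_one Q"
    and w: "wide_subcat (free_cat Q) T"
  shows "T = ids Q \<union> (T \<inter> arr_mor Q ` Arrs Q)"
  using w mor_char[OF fq d1] unfolding wide_subcat_def ids_def by auto

lemma wide_idsS:
  assumes fq: "finite_quiver Q" and d1: "diameter_one Q"
    and S: "S \<subseteq> arr_mor Q ` Arrs Q"
  shows "wide_subcat (free_cat Q) (ids Q \<union> S)"
    unfolding wide_subcat_def
  proof (intro conjI ballI impI)
    show "ids Q \<union> S \<subseteq> Mor (free_cat Q)" using S mor_char[OF fq d1] by (auto simp: ids_def)
    show "\<And>a. a \<in> Ob (free_cat Q) \<Longrightarrow> Idm (free_cat Q) a \<in> ids Q \<union> S" by (auto simp: ids_def)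
    fix f g assume f: "f \<in> ids Q \<union> S" and g: "g \<in> ids Q \<union> S" and c: "Cod (free_cat Q) f = Dom (free_cat Q) g"
    show "Comp (free_cat Q) g f \<in> ids Q \<union> S"
    proof (cases "f \<in> ids Q")
      case True then show ?thesis using g c by (auto simp: ids_def)
    next
      case False
      then obtain e1 where e1: "f = arr_mor Q e1" "e1 \<in> Arrs Q" using f S by auto
      show ?thesis
      proof (cases "g \<in> ids Q")
        case True then show ?thesis using f c e1 by (auto simp: ids_def arr_mor_def)
      next
        case False
        then obtain e2 where e2: "g = arr_mor Q e2" "e2 \<in> Arrs Q" using g S by auto
        then show ?thesis using e1 c d1_no[OF d1] by auto
      qed
    qed
  qed

lemma wide_gen:
  assumes fq: "finite_quiver Q" and d1: "diameter_one Q"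
    and S: "S \<subseteq> arr_mor Q ` Arrs Q"
  shows "gen_wide (free_cat Q) S = ids Q \<union> S"
proof -
  have w: "wide_subcat (free_cat Q) (ids Q \<union> S)" by (rule wide_idsS[OF fq d1 S])
  have "\<And>T. wide_subcat (free_cat Q) T \<Longrightarrow> S \<subseteq> T \<Longrightarrow> ids Q \<union> S \<subseteq> T"
    by (auto simp: wide_subcat_def ids_def)
  then show ?thesis using w unfolding gen_wide_def by blast
qed

lemma pair_cases:
  assumes d1: "diameter_one Q"
    and m: "m \<in> ids Q \<union> arr_mor Q ` Arrs Q" and q: "q \<in> ids Q \<union> arr_mor Q ` Arrs Q"
    and c: "snd (snd m) = fst q"
    and f: "(fst m, fst (snd m) @ fst (snd q), snd (snd q)) = f"
  shows "(f \<in> ids Q \<and> m = f \<and> q = f) \<or>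
    (\<exists>e\<in>Arrs Q. f = arr_mor Q e \<and> ((m = (src Q e,[],src Q e) \<and> q = f) \<or> (m = f \<and> q = (tgt Q e,[],tgt Q e))))"
proof (cases "m \<in> ids Q")
  case True
  then obtain a where a: "m = (a,[],a)" "a \<in> Verts Q" by (auto simp: ids_def)
  show ?thesis
  proof (cases "q \<in> ids Q")
    case True
    then show ?thesis using a c f by (auto simp: ids_def)
  next
    case False
    then obtain e where "q = arr_mor Q e" "e \<in> Arrs Q" using q by auto
    then show ?thesis using a c f by (auto simp: arr_mor_def)
  qed
next
  case False
  then obtain e where e: "m = arr_mor Q e" "e \<in> Arrs Q" using m by auto
  show ?thesis
  proof (cases "q \<in> ids Q")
    case True
    then show ?thesis using e c f by (auto simp: ids_def arr_mor_def)
  next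
    case False
    then obtain e2 where "q = arr_mor Q e2" "e2 \<in> Arrs Q" using q by auto
    then show ?thesis using e c d1_no[OF d1] by auto
  qed
qed

lemma deg_exists:
  fixes r :: "('a \<times> 'a) set"
  assumes fin: "finite r" and ac: "acyclic r"
  shows "\<exists>deg :: 'a \<Rightarrow> nat. \<forall>u v. (u,v) \<in> r \<longrightarrow> deg u < deg v"
proof -
  define deg where "deg v = card {u. (u,v) \<in> r\<^sup>+}" for v
  have finp: "finite {u. (u,v) \<in> r\<^sup>+}" for v
  proof -
    have "{u. (u,v) \<in> r\<^sup>+} \<subseteq> fst ` r\<^sup>+" by force
    moreover have "finite (r\<^sup>+)" using fin by (simp add: finite_trancl)
    ultimately show ?thesis using finite_subset by blast
  qed
  have "deg u < deg v" if uv: "(u,v) \<in> r" for u v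
  proof -
    have "{w. (w,u) \<in> r\<^sup>+} \<subset> {w. (w,v) \<in> r\<^sup>+}"
    proof
      show "{w. (w,u) \<in> r\<^sup>+} \<subseteq> {w. (w,v) \<in> r\<^sup>+}" using uv by auto
      have "u \<notin> {w. (w,u) \<in> r\<^sup>+}" using ac by (auto simp: acyclic_def)
      moreover have "u \<in> {w. (w,v) \<in> r\<^sup>+}" using uv by auto
      ultimately show "{w. (w,u) \<in> r\<^sup>+} \<noteq> {w. (w,v) \<in> r\<^sup>+}" by blast
    qed
    then show ?thesis unfolding deg_def using finp psubset_card_mono by blast
  qed
  then show ?thesis by blast
qed


definition fvalid where
  "fvalid Q Jp Jm f p \<longleftrightarrow> p \<in> Jm \<times> Jp \<and> Cod (free_cat Q) (fst p) = Dom (free_cat Q) (snd p)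
     \<and> Comp (free_cat Q) (snd p) (fst p) = f"

lemma fact_of:
  assumes fq: "finite_quiver Q" and d1: "diameter_one Q"
    and Jp: "Jp = ids Q \<union> Sp" and Jm: "Jm = ids Q \<union> Sm"
    and Sp: "Sp \<subseteq> arr_mor Q ` Arrs Q" and Sm: "Sm \<subseteq> arr_mor Q ` Arrs Q"
    and ex: "\<forall>e\<in>Arrs Q. arr_mor Q e \<in> Sp \<longleftrightarrow> arr_mor Q e \<notin> Sm"
    and f: "f \<in> Mor (free_cat Q)"
  shows "\<exists>!p. fvalid Q Jp Jm f p"
proof -
  have pc: "(f \<in> ids Q \<and> fst p = f \<and> snd p = f) \<or>
    (\<exists>e\<in>Arrs Q. f = arr_mor Q e \<and> ((fst p = (src Q e,[],src Q e) \<and> snd p = f) \<or> (fst p = f \<and> snd p = (tgt Q e,[],tgt Q e))))"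
    if v: "fvalid Q Jp Jm f p" for p
  proof -
    have "fst p \<in> ids Q \<union> arr_mor Q ` Arrs Q" "snd p \<in> ids Q \<union> arr_mor Q ` Arrs Q"
      using v Jp Jm Sp Sm by (auto simp: fvalid_def)
    from pair_cases[OF d1 this] v show ?thesis by (auto simp: fvalid_def)
  qed
  have fA: "f \<in> ids Q \<union> arr_mor Q ` Arrs Q" using f mor_char[OF fq d1] by (simp add: ids_def)
  show ?thesis
  proof (cases "f \<in> ids Q")
    case True
    have "fvalid Q Jp Jm f (f,f)" using True Jp Jm by (auto simp: fvalid_def ids_def)
    moreover have "p = (f,f)" if "fvalid Q Jp Jm f p" for p
      using pc[OF that] True by (auto simp: ids_def prod_eq_iff)
    ultimately show ?thesis by blast
  next
    case False
    then obtain e where e: "f = arr_mor Q e" "e \<in> Arrs Q" using fA by auto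
    have sv: "src Q e \<in> Verts Q" "tgt Q e \<in> Verts Q" using fq e by (auto simp: finite_quiver_def)
    show ?thesis
    proof (cases "f \<in> Sp")
      case True
      have "fvalid Q Jp Jm f ((src Q e,[],src Q e), f)" using True Jp Jm sv e
        by (auto simp: fvalid_def ids_def arr_mor_def)
      moreover have "p = ((src Q e,[],src Q e), f)" if v: "fvalid Q Jp Jm f p" for p
      proof -
        have nJ: "f \<notin> Jm" using True ex e Jm False by auto
        from pc[OF v] False obtain e' where e': "e' \<in> Arrs Q" "f = arr_mor Q e'"
          "(fst p = (src Q e',[],src Q e') \<and> snd p = f) \<or> (fst p = f \<and> snd p = (tgt Q e',[],tgt Q e'))"
          by blast
        have "e' = e" using e e' by simp
        moreover have "fst p \<in> Jm" using v by (auto simp: fvalid_def)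
        ultimately have "(fst p = (src Q e,[],src Q e) \<and> snd p = f)" using e'(3) nJ by metis
        then show ?thesis by (metis prod.collapse)
      qed
      ultimately show ?thesis by blast
    next
      case nS: False
      have "f \<in> Sm" using nS ex e by auto
      then have "fvalid Q Jp Jm f (f, (tgt Q e,[],tgt Q e))" using Jp Jm sv e
        by (auto simp: fvalid_def ids_def arr_mor_def)
      moreover have "p = (f, (tgt Q e,[],tgt Q e))" if v: "fvalid Q Jp Jm f p" for p
      proof -
        have nJ: "f \<notin> Jp" using nS e Jp False by auto
        from pc[OF v] False obtain e' where e': "e' \<in> Arrs Q" "f = arr_mor Q e'"
          "(fst p = (src Q e',[],src Q e') \<and> snd p = f) \<or> (fst p = f \<and> snd p = (tgt Q e',[],tgt Q e'))"
          by blast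
        have "e' = e" using e e' by simp
        moreover have "snd p \<in> Jp" using v by (auto simp: fvalid_def)
        ultimately have "(fst p = f \<and> snd p = (tgt Q e,[],tgt Q e))" using e'(3) nJ by metis
        then show ?thesis by (metis prod.collapse)
      qed
      ultimately show ?thesis by blast
    qed
  qed
qed

lemma fact_excl:
  assumes fq: "finite_quiver Q" and d1: "diameter_one Q"
    and Jp2: "Jp \<subseteq> ids Q \<union> arr_mor Q ` Arrs Q" and Jm2: "Jm \<subseteq> ids Q \<union> arr_mor Q ` Arrs Q"
    and Jp: "ids Q \<subseteq> Jp" and Jm: "ids Q \<subseteq> Jm"
    and fa: "\<forall>f\<in>Mor (free_cat Q). \<exists>!p. fvalid Q Jp Jm f p"
    and e: "e \<in> Arrs Q"
  shows "arr_mor Q e \<in> Jp \<longleftrightarrow> arr_mor Q e \<notin> Jm"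
proof -
  let ?f = "arr_mor Q e"
  have sv: "src Q e \<in> Verts Q" "tgt Q e \<in> Verts Q" using fq e by (auto simp: finite_quiver_def)
  have fM: "?f \<in> Mor (free_cat Q)" using sv e by (auto simp: arr_mor_def is_path_def)
  then obtain p where p: "fvalid Q Jp Jm ?f p" and u: "\<And>p'. fvalid Q Jp Jm ?f p' \<Longrightarrow> p' = p"
    using fa by metis
  have i1: "(src Q e,[],src Q e) \<in> Jm" "(src Q e,[],src Q e) \<in> Jp" 
    "(tgt Q e,[],tgt Q e) \<in> Jp" "(tgt Q e,[],tgt Q e) \<in> Jm"
    using sv Jp Jm by (auto simp: ids_def)
  show ?thesis
  proof
    assume a: "?f \<in> Jp"
    show "?f \<notin> Jm"
    proof
      assume b: "?f \<in> Jm"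
      have "fvalid Q Jp Jm ?f ((src Q e,[],src Q e), ?f)" using a i1
        by (auto simp: fvalid_def arr_mor_def)
      moreover have "fvalid Q Jp Jm ?f (?f, (tgt Q e,[],tgt Q e))" using b i1
        by (auto simp: fvalid_def arr_mor_def)
      ultimately show False using u by (metis arr_mor_ne(2) fst_conv)
    qed
  next
    assume a: "?f \<notin> Jm"
    have "fst p \<in> ids Q \<union> arr_mor Q ` Arrs Q" "snd p \<in> ids Q \<union> arr_mor Q ` Arrs Q"
      using p Jp2 Jm2 by (auto simp: fvalid_def)
    from pair_cases[OF d1 this] p a show "?f \<in> Jp"
      by (auto simp: fvalid_def ids_def)
  qed
qed



definition Sp where "Sp Q \<sigma> = {arr_mor Q e | e. e \<in> Arrs Q \<and> \<sigma> e = Plus}"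
definition Sm where "Sm Q \<sigma> = {arr_mor Q e | e. e \<in> Arrs Q \<and> \<sigma> e = Minus}"

lemma Qplus_eq: "finite_quiver Q \<Longrightarrow> diameter_one Q \<Longrightarrow> Qplus Q \<sigma> = ids Q \<union> Sp Q \<sigma>"
  unfolding Qplus_def Sp_def by (rule wide_gen) auto
lemma Qminus_eq: "finite_quiver Q \<Longrightarrow> diameter_one Q \<Longrightarrow> Qminus Q \<sigma> = ids Q \<union> Sm Q \<sigma>"
  unfolding Qminus_def Sm_def by (rule wide_gen) auto

lemma forward:
  assumes fq: "finite_quiver Q" and d1: "diameter_one Q"
    and ac: "acyclic_labeling Q \<sigma>"
  shows "reedy_structure (free_cat Q) (Qplus Q \<sigma>) (Qminus Q \<sigma>)"
proof -
  have fo: "finite (orientation Q \<sigma>)"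
  proof -
    have "orientation Q \<sigma> \<subseteq> (\<lambda>e. (src Q e, tgt Q e)) ` Arrs Q \<union> (\<lambda>e. (tgt Q e, src Q e)) ` Arrs Q"
      unfolding orientation_def by auto
    moreover have "finite (Arrs Q)" using fq by (simp add: finite_quiver_def)
    ultimately show ?thesis using finite_subset by blast
  qed
  obtain deg :: "'a \<Rightarrow> nat" where deg: "\<And>u v. (u,v) \<in> orientation Q \<sigma> \<Longrightarrow> deg u < deg v"
    using deg_exists[OF fo] ac unfolding acyclic_labeling_def by blast
  have w1: "wide_subcat (free_cat Q) (Qplus Q \<sigma>)"
    unfolding Qplus_eq[OF fq d1] Sp_def by (rule wide_idsS[OF fq d1]) auto
  have w2: "wide_subcat (free_cat Q) (Qminus Q \<sigma>)"
    unfolding Qminus_eq[OF fq d1] Sm_def by (rule wide_idsS[OF fq d1]) auto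
  have dp: "\<And>e. e \<in> Arrs Q \<Longrightarrow> \<sigma> e = Plus \<Longrightarrow> deg (src Q e) < deg (tgt Q e)"
    using deg unfolding orientation_def by blast
  have dm: "\<And>e. e \<in> Arrs Q \<Longrightarrow> \<sigma> e = Minus \<Longrightarrow> deg (tgt Q e) < deg (src Q e)"
    using deg unfolding orientation_def by blast
  have d1': "\<forall>f\<in>Qplus Q \<sigma>. f \<noteq> Idm (free_cat Q) (Dom (free_cat Q) f) \<longrightarrow>
      deg (Dom (free_cat Q) f) < deg (Cod (free_cat Q) f)"
    unfolding Qplus_eq[OF fq d1] Sp_def using dp by (auto simp: ids_def)
  have d2': "\<forall>f\<in>Qminus Q \<sigma>. f \<noteq> Idm (free_cat Q) (Dom (free_cat Q) f) \<longrightarrow>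
      deg (Cod (free_cat Q) f) < deg (Dom (free_cat Q) f)"
    unfolding Qminus_eq[OF fq d1] Sm_def using dm by (auto simp: ids_def)
  have fa: "\<forall>f\<in>Mor (free_cat Q). \<exists>!p. fvalid Q (Qplus Q \<sigma>) (Qminus Q \<sigma>) f p"
  proof
    fix f assume f: "f \<in> Mor (free_cat Q)"
    show "\<exists>!p. fvalid Q (Qplus Q \<sigma>) (Qminus Q \<sigma>) f p"
    proof (rule fact_of[OF fq d1 Qplus_eq[OF fq d1] Qminus_eq[OF fq d1] _ _ _ f])
      show "Sp Q \<sigma> \<subseteq> arr_mor Q ` Arrs Q" "Sm Q \<sigma> \<subseteq> arr_mor Q ` Arrs Q"
        by (auto simp: Sp_def Sm_def)
      show "\<forall>e\<in>Arrs Q. (arr_mor Q e \<in> Sp Q \<sigma>) = (arr_mor Q e \<notin> Sm Q \<sigma>)"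
        by (auto simp: Sp_def Sm_def) (metis sign.exhaust)
    qed
  qed
  show ?thesis unfolding reedy_structure_def using w1 w2 d1' d2' fa unfolding fvalid_def by blast
qed


lemma backward:
  assumes fq: "finite_quiver Q" and d1: "diameter_one Q"
    and R: "reedy_structure (free_cat Q) Jp Jm"
  shows "\<exists>\<sigma>\<in>{\<sigma> \<in> labelings Q. acyclic_labeling Q \<sigma>}. (Jp, Jm) = (Qplus Q \<sigma>, Qminus Q \<sigma>)"
proof -
  have wp: "wide_subcat (free_cat Q) Jp" and wm: "wide_subcat (free_cat Q) Jm"
    using R by (auto simp: reedy_structure_def)
  obtain deg :: "'a \<Rightarrow> nat" where
    dp: "\<forall>f\<in>Jp. f \<noteq> Idm (free_cat Q) (Dom (free_cat Q) f) \<longrightarrow> deg (Dom (free_cat Q) f) < deg (Cod (free_cat Q) f)" and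
    dm: "\<forall>f\<in>Jm. f \<noteq> Idm (free_cat Q) (Dom (free_cat Q) f) \<longrightarrow> deg (Cod (free_cat Q) f) < deg (Dom (free_cat Q) f)" and
    fa0: "\<forall>f\<in>Mor (free_cat Q). \<exists>!p. p \<in> Jm \<times> Jp \<and> Cod (free_cat Q) (fst p) = Dom (free_cat Q) (snd p)
                              \<and> Comp (free_cat Q) (snd p) (fst p) = f"
    using R unfolding reedy_structure_def by blast
  have fa: "\<forall>f\<in>Mor (free_cat Q). \<exists>!p. fvalid Q Jp Jm f p" using fa0 unfolding fvalid_def .
  have Jp: "Jp = ids Q \<union> (Jp \<inter> arr_mor Q ` Arrs Q)" by (rule wide_char[OF fq d1 wp])
  have Jm: "Jm = ids Q \<union> (Jm \<inter> arr_mor Q ` Arrs Q)" by (rule wide_char[OF fq d1 wm])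
  have ex: "\<And>e. e \<in> Arrs Q \<Longrightarrow> arr_mor Q e \<in> Jp \<longleftrightarrow> arr_mor Q e \<notin> Jm"
  proof -
    have "Jp \<subseteq> Mor (free_cat Q)" "Jm \<subseteq> Mor (free_cat Q)" using wp wm by (simp_all add: wide_subcat_def)
    then have a1: "Jp \<subseteq> ids Q \<union> arr_mor Q ` Arrs Q" "Jm \<subseteq> ids Q \<union> arr_mor Q ` Arrs Q"
      using mor_char[OF fq d1] by (simp_all add: ids_def)
    have a2: "ids Q \<subseteq> Jp" "ids Q \<subseteq> Jm" using wp wm by (auto simp: wide_subcat_def ids_def)
    fix e assume "e \<in> Arrs Q"
    then show "arr_mor Q e \<in> Jp \<longleftrightarrow> arr_mor Q e \<notin> Jm"
      by (rule fact_excl[OF fq d1 a1 a2 fa])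
  qed
  define \<sigma> where "\<sigma> e = (if e \<in> Arrs Q then (if arr_mor Q e \<in> Jp then Plus else Minus) else undefined)" for e
  have lab: "\<sigma> \<in> labelings Q" unfolding labelings_def \<sigma>_def by auto
  have eqp: "Jp = Qplus Q \<sigma>"
  proof -
    have "Jp \<inter> arr_mor Q ` Arrs Q = Sp Q \<sigma>" unfolding Sp_def \<sigma>_def by auto
    then show ?thesis using Jp Qplus_eq[OF fq d1] by metis
  qed
  have eqm: "Jm = Qminus Q \<sigma>"
  proof -
    have "Jm \<inter> arr_mor Q ` Arrs Q = Sm Q \<sigma>" unfolding Sm_def \<sigma>_def using ex by auto
    then show ?thesis using Jm Qminus_eq[OF fq d1] by metis
  qed
  have "orientation Q \<sigma> \<subseteq> inv_image less_than deg"
  proof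
    fix x assume "x \<in> orientation Q \<sigma>"
    then obtain e where e: "e \<in> Arrs Q" and
      c: "(x = (src Q e, tgt Q e) \<and> \<sigma> e = Plus) \<or> (x = (tgt Q e, src Q e) \<and> \<sigma> e = Minus)"
      unfolding orientation_def by blast
    show "x \<in> inv_image less_than deg"
    proof (cases "\<sigma> e = Plus")
      case True
      then have "arr_mor Q e \<in> Jp" using e unfolding \<sigma>_def by (auto split: if_splits)
      then have "deg (src Q e) < deg (tgt Q e)" using dp by (auto simp: arr_mor_def)
      then show ?thesis using c True by auto
    next
      case False
      then have "arr_mor Q e \<in> Jm" using e ex unfolding \<sigma>_def by (auto split: if_splits)
      then have "deg (tgt Q e) < deg (src Q e)" using dm by (auto simp: arr_mor_def)
      then show ?thesis using c False by auto
    qed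
  qed
  then have "acyclic_labeling Q \<sigma>" unfolding acyclic_labeling_def
    using acyclic_subset wf_acyclic wf_inv_image wf_less_than by blast
  then show ?thesis using lab eqp eqm by blast
qed

theorem mainTheorem5:
  fixes Q :: "('v, 'e) quiver"
  assumes "finite_quiver Q" and "diameter_one Q"
  shows "bij_betw (\<lambda>\<sigma>. (Qplus Q \<sigma>, Qminus Q \<sigma>))
           {\<sigma> \<in> labelings Q. acyclic_labeling Q \<sigma>}
           (reedy_structures (free_cat Q))"
proof (rule bij_betw_imageI)
  note fq = assms(1) and d1 = assms(2)
  show "inj_on (\<lambda>\<sigma>. (Qplus Q \<sigma>, Qminus Q \<sigma>)) {\<sigma> \<in> labelings Q. acyclic_labeling Q \<sigma>}"
  proof (rule inj_onI)
    fix \<sigma> \<tau> assume s: "\<sigma> \<in> {\<sigma> \<in> labelings Q. acyclic_labeling Q \<sigma>}"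
      and t: "\<tau> \<in> {\<sigma> \<in> labelings Q. acyclic_labeling Q \<sigma>}"
      and eq: "(Qplus Q \<sigma>, Qminus Q \<sigma>) = (Qplus Q \<tau>, Qminus Q \<tau>)"
    have eqp: "ids Q \<union> Sp Q \<sigma> = ids Q \<union> Sp Q \<tau>"
    proof -
      have "Qplus Q \<sigma> = Qplus Q \<tau>" using eq by simp
      then show ?thesis using Qplus_eq[OF fq d1] by metis
    qed
    show "\<sigma> = \<tau>"
    proof
      fix e
      show "\<sigma> e = \<tau> e"
      proof (cases "e \<in> Arrs Q")
        case False
        have "\<sigma> \<in> Arrs Q \<rightarrow>\<^sub>E UNIV" "\<tau> \<in> Arrs Q \<rightarrow>\<^sub>E UNIV" using s t by (simp_all add: labelings_def)
        then show ?thesis using False PiE_arb by metis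
      next
        case True
        have "arr_mor Q e \<notin> ids Q" by (auto simp: ids_def)
        then have "arr_mor Q e \<in> Sp Q \<sigma> \<longleftrightarrow> arr_mor Q e \<in> Sp Q \<tau>" using eqp by blast
        moreover have "\<And>\<rho>. arr_mor Q e \<in> Sp Q \<rho> \<longleftrightarrow> \<rho> e = Plus"
          using True unfolding Sp_def by auto
        ultimately have "\<sigma> e = Plus \<longleftrightarrow> \<tau> e = Plus" by simp
        then show ?thesis by (metis sign.exhaust)
      qed
    qed
  qed
  show "(\<lambda>\<sigma>. (Qplus Q \<sigma>, Qminus Q \<sigma>)) ` {\<sigma> \<in> labelings Q. acyclic_labeling Q \<sigma>} = reedy_structures (free_cat Q)"
  proof
    show "(\<lambda>\<sigma>. (Qplus Q \<sigma>, Qminus Q \<sigma>)) ` {\<sigma> \<in> labelings Q. acyclic_labeling Q \<sigma>} \<subseteq> reedy_structures (free_cat Q)"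
    proof
      fix x assume "x \<in> (\<lambda>\<sigma>. (Qplus Q \<sigma>, Qminus Q \<sigma>)) ` {\<sigma> \<in> labelings Q. acyclic_labeling Q \<sigma>}"
      then obtain \<sigma> where "x = (Qplus Q \<sigma>, Qminus Q \<sigma>)" "acyclic_labeling Q \<sigma>" by blast
      then show "x \<in> reedy_structures (free_cat Q)"
        using forward[OF fq d1] unfolding reedy_structures_def by blast
    qed
    show "reedy_structures (free_cat Q) \<subseteq> (\<lambda>\<sigma>. (Qplus Q \<sigma>, Qminus Q \<sigma>)) ` {\<sigma> \<in> labelings Q. acyclic_labeling Q \<sigma>}"
    proof
      fix x assume "x \<in> reedy_structures (free_cat Q)"
      then obtain Jp Jm where x: "x = (Jp, Jm)" and R: "reedy_structure (free_cat Q) Jp Jm"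
        unfolding reedy_structures_def by blast
      from backward[OF fq d1 R] show "x \<in> (\<lambda>\<sigma>. (Qplus Q \<sigma>, Qminus Q \<sigma>)) ` {\<sigma> \<in> labelings Q. acyclic_labeling Q \<sigma>}"
        using x by blast
    qed
  qed
qed

end
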